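(* $\mathrm{Sort}(\mathrm{SC}_{\underline{23}1})$ is not a permutation class.
   Context: $\mathfrak S_n$ is the set of permutations of $\{1,\dots,n\}$. A permutation $\pi$ contains a (classical) permutation $\tau$ if some subsequence of $\pi$ has the same relative order as $\tau$. A permutation class is a set $\Pi$ of permutations such that every permutation contained in some $\pi\in\Pi$ is also in $\Pi$. A vincular pattern is a permutation with some entries underlined; a sequence contains it if it has a subsequence with the same relative order in which entries corresponding to adjacent underlined entries occupy consecutive positions. An occurrence of $\underline{23}1$ is $a_j a_{j+1} a_l$ with $l>j+1$ and $a_l<a_j<a_{j+1}$. For a pattern $\sigma$, the map $\mathrm{SC}_\sigma$ acts on $\tau$: read entries left to right; when the next entry $x$ is read, if pushing $x$ yields a stack whose entries read top to bottom (stack adjacency = consecutive positions) avoid $\sigma$, push $x$; otherwise pop the top stack entry to the output and repeat. At the end pop all remaining entries; the output is $\mathrm{SC}_\sigma(\tau)$. West's stack-sorting map is $s=\mathrm{SC}_{21}$. $\mathrm{Sort}_n(\mathrm{SC}_\sigma)=\{\tau\in\mathfrak S_n : s(\mathrm{SC}_\sigma(\tau))=12\cdots n\}$ and $\mathrm{Sort}(\mathrm{SC}_\sigma)=\bigcup_{n\ge1}\mathrm{Sort}_n(\mathrm{SC}_\sigma)$. *)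

theory Defs
  imports Main
begin

definition is_perm :: "nat list \<Rightarrow> bool" where
  "is_perm p \<longleftrightarrow> length p \<ge> 1 \<and> distinct p \<and> set p = {1..length p}"

definition contains :: "nat list \<Rightarrow> nat list \<Rightarrow> bool" where
  "contains p t \<longleftrightarrow> (\<exists>is. length is = length t \<and> sorted_wrt (<) is \<and>
      (\<forall>i<length is. is ! i < length p) \<and>
      (\<forall>i<length t. \<forall>j<length t. (p ! (is ! i) < p ! (is ! j)) \<longleftrightarrow> (t ! i < t ! j)))"

definition perm_class :: "nat list set \<Rightarrow> bool" where
  "perm_class P \<longleftrightarrow> (\<forall>p\<in>P. is_perm p) \<and>
     (\<forall>p\<in>P. \<forall>t. is_perm t \<and> contains p t \<longrightarrow> t \<in> P)"

definition contains_23_1 :: "nat list \<Rightarrow> bool" where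
  "contains_23_1 xs \<longleftrightarrow> (\<exists>j l. j + 1 < l \<and> l < length xs \<and>
      xs ! l < xs ! j \<and> xs ! j < xs ! (j + 1))"

text \<open>The stack is a list whose head is the top,
so the stack read top to bottom is the list itself.\<close>

function sc :: "(nat list \<Rightarrow> bool) \<Rightarrow> nat list \<Rightarrow> nat list \<Rightarrow> nat list" where
  "sc ok [] st = st"
| "sc ok (x # xs) st =
     (if ok (x # st) then sc ok xs (x # st)
      else (case st of [] \<Rightarrow> sc ok xs [x] | y # st' \<Rightarrow> y # sc ok (x # xs) st'))"
  by pat_completeness auto
termination
  by (relation "measure (\<lambda>(ok, inp, st). 2 * length inp + length st)") auto

definition SC :: "(nat list \<Rightarrow> bool) \<Rightarrow> nat list \<Rightarrow> nat list" where
  "SC ok t = sc ok t []"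

definition west_s :: "nat list \<Rightarrow> nat list" where
  "west_s t = SC (\<lambda>st. \<not> contains st [2, 1]) t"

definition SC_23_1 :: "nat list \<Rightarrow> nat list" where
  "SC_23_1 t = SC (\<lambda>st. \<not> contains_23_1 st) t"

definition Sort_SC_23_1 :: "nat list set" where
  "Sort_SC_23_1 = {t. is_perm t \<and> west_s (SC_23_1 t) = [1..<length t + 1]}"

end

theory Submission
  imports Defs
begin

lemma c231_iff: "contains_23_1 xs \<longleftrightarrow> (\<exists>j\<in>set [0..<length xs]. \<exists>l\<in>set [0..<length xs].
      j + 1 < l \<and> xs ! l < xs ! j \<and> xs ! j < xs ! (j + 1))"
  unfolding contains_23_1_def
proof
  assume "\<exists>j l. j + 1 < l \<and> l < length xs \<and> xs ! l < xs ! j \<and> xs ! j < xs ! (j + 1)"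
  then obtain j l where h: "j + 1 < l" "l < length xs" "xs ! l < xs ! j" "xs ! j < xs ! (j + 1)" by blast
  then show "\<exists>j\<in>set [0..<length xs]. \<exists>l\<in>set [0..<length xs].
      j + 1 < l \<and> xs ! l < xs ! j \<and> xs ! j < xs ! (j + 1)"
    by (intro bexI[of _ j] bexI[of _ l]) auto
qed (auto, blast)

lemma c21_iff: "contains st [2,1] \<longleftrightarrow> (\<exists>i\<in>set [0..<length st]. \<exists>j\<in>set [0..<length st].
      i < j \<and> st ! j < st ! i)"
proof
  assume "contains st [2,1]"
  then obtain ixs where h: "length ixs = length [2,1::nat]" "sorted_wrt (<) ixs" "\<forall>i<length ixs. ixs ! i < length st"
    "\<forall>i<length [2,1::nat]. \<forall>j<length [2,1::nat]. (st ! (ixs ! i) < st ! (ixs ! j)) \<longleftrightarrow> ([2,1::nat] ! i < [2,1] ! j)"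
    unfolding contains_def apply (elim exE conjE) apply (rule that) apply assumption+ done
  then obtain a b where ab: "ixs = [a,b]"
    using h(1) by (cases ixs; cases "tl ixs"; simp)
  have 1: "st ! b < st ! a" using h(4)[rule_format, of 1 0] ab by simp
  have 2: "a < b" using h(2) ab by simp
  have 3: "b < length st" using h(3)[rule_format, of 1] ab by simp
  show "\<exists>i\<in>set [0..<length st]. \<exists>j\<in>set [0..<length st]. i < j \<and> st ! j < st ! i"
    using 1 2 3 by (intro bexI[of _ a] bexI[of _ b]) auto
next
  assume "\<exists>i\<in>set [0..<length st]. \<exists>j\<in>set [0..<length st]. i < j \<and> st ! j < st ! i"
  then obtain a b where "a < b" "b < length st" "st ! b < st ! a" by auto
  then show "contains st [2,1]" unfolding contains_def
    apply (rule_tac exI[of _ "[a,b]"])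
    by (auto simp: less_Suc_eq)
qed

lemma in_sort: "[2,5,3,1,4] \<in> Sort_SC_23_1"
proof -
  have "west_s (SC_23_1 [2,5,3,1,4]) = [1..<length [2,5,3,1,4::nat] + 1]"
    unfolding west_s_def SC_23_1_def SC_def
    unfolding c21_iff c231_iff
    by code_simp
  moreover have "is_perm [2,5,3,1,4]" by (auto simp: is_perm_def)
  ultimately show ?thesis unfolding Sort_SC_23_1_def by blast
qed

lemma not_in_sort: "[2,4,1,3] \<notin> Sort_SC_23_1"
proof -
  have "west_s (SC_23_1 [2,4,1,3]) \<noteq> [1..<length [2,4,1,3::nat] + 1]"
    unfolding west_s_def SC_23_1_def SC_def
    unfolding c21_iff c231_iff
    by code_simp
  then show ?thesis unfolding Sort_SC_23_1_def by blast
qed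

lemma perm_t: "is_perm [2,4,1,3]"
  by (auto simp: is_perm_def)

lemma cont: "contains [2,5,3,1,4] [2,4,1,3]"
  unfolding contains_def
  apply (rule exI[of _ "[0,1,3,4]"])
  apply (simp add: less_Suc_eq numeral_eq_Suc)
  done

theorem mainTheorem17:
  shows "\<not> perm_class Sort_SC_23_1"
  unfolding perm_class_def using in_sort not_in_sort perm_t cont by blast

end
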